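(* Let $\mathcal F\subset\mathcal G\subset 2^{[n]}$, where $\mathcal G$ is a down-set and $\mathcal F$ is intersecting. If $\tau(\mathcal F)\le 2$, then $$|\mathcal F|\le \max_{x\in[n]}\big|\{G\in\mathcal G: x\in G\}\big|.$$
   Context: $[n]=\{1,\dots,n\}$. A family $\mathcal G\subset 2^{[n]}$ is a down-set if $B\in\mathcal G$ and $A\subset B$ imply $A\in\mathcal G$. A family $\mathcal F$ is intersecting if $A\cap B\ne\emptyset$ for all $A,B\in\mathcal F$. For a family $\mathcal F$ of non-empty sets, the covering number $\tau(\mathcal F)$ is the minimal integer $t$ such that there is a $t$-element set $T$ with $T\cap F\neq\emptyset$ for all $F\in\mathcal F$. *)

theory Defs
  imports Main
begin

definition down_set :: "nat set set \<Rightarrow> bool" where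
  "down_set G \<longleftrightarrow> (\<forall>B\<in>G. \<forall>A. A \<subseteq> B \<longrightarrow> A \<in> G)"

definition intersecting :: "nat set set \<Rightarrow> bool" where
  "intersecting F \<longleftrightarrow> (\<forall>A\<in>F. \<forall>B\<in>F. A \<inter> B \<noteq> {})"

definition covering_number :: "nat set set \<Rightarrow> nat" where
  "covering_number F = (LEAST t. \<exists>T. finite T \<and> card T = t \<and> (\<forall>X\<in>F. T \<inter> X \<noteq> {}))"

end

theory Submission
  imports Defs
begin

lemma split_card:
  assumes "finite Y" "a \<notin> Y" "X \<subseteq> Pow (insert a Y)"
  shows "card X = card {S\<in>Pow Y. S\<in>X} + card {S\<in>Pow Y. insert a S \<in> X}"
proof -
  have eq: "X = {S\<in>Pow Y. S\<in>X} \<union> insert a ` {S\<in>Pow Y. insert a S \<in> X}"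
  proof
    show "X \<subseteq> {S\<in>Pow Y. S\<in>X} \<union> insert a ` {S\<in>Pow Y. insert a S \<in> X}"
    proof
      fix S assume S: "S \<in> X"
      show "S \<in> {S\<in>Pow Y. S\<in>X} \<union> insert a ` {S\<in>Pow Y. insert a S \<in> X}"
      proof (cases "a \<in> S")
        case True
        then have "S = insert a (S - {a})" by auto
        moreover have "S - {a} \<in> {S\<in>Pow Y. insert a S \<in> X}"
          using S True assms(3) by (auto simp: insert_absorb)
        ultimately show ?thesis by blast
      next
        case False
        then show ?thesis using S assms(3) by auto
      qed
    qed
  qed auto
  have disj: "{S\<in>Pow Y. S\<in>X} \<inter> insert a ` {S\<in>Pow Y. insert a S \<in> X} = {}"
    using assms(2) by auto
  have inj: "inj_on (insert a) (Pow Y)"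
  proof (rule inj_onI)
    fix S T assume S: "S \<in> Pow Y" and T: "T \<in> Pow Y" and eq: "insert a S = insert a T"
    have "S = insert a S - {a}" using S assms(2) by auto
    also have "\<dots> = T" using T assms(2) eq by auto
    finally show "S = T" .
  qed
  have fin: "finite (Pow Y)" using assms(1) by simp
  have "card X = card {S\<in>Pow Y. S\<in>X} + card (insert a ` {S\<in>Pow Y. insert a S \<in> X})"
    by (subst eq, rule card_Un_disjoint) (use fin disj in auto)
  also have "card (insert a ` {S\<in>Pow Y. insert a S \<in> X}) = card {S\<in>Pow Y. insert a S \<in> X}"
    by (rule card_image, rule inj_on_subset[OF inj]) auto
  finally show ?thesis .
qed

lemma arith_aux:
  fixes d0 d1 u0 u1 x0 x1 M :: nat
  assumes "M * x0 \<le> d0 * u0" "M * x1 \<le> d1 * u1" "d1 \<le> d0" "u0 \<le> u1"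
  shows "2 * M * (x0 + x1) \<le> (d0 + d1) * (u0 + u1)"
proof -
  obtain p where p: "d0 = d1 + p" using assms(3) le_Suc_ex by blast
  obtain q where q: "u1 = u0 + q" using assms(4) le_Suc_ex by blast
  have "2 * M * (x0 + x1) \<le> 2 * (d0 * u0 + d1 * u1)" using assms(1,2) by (simp add: algebra_simps)
  also have "\<dots> \<le> (d0 + d1) * (u0 + u1)" unfolding p q by (simp add: algebra_simps)
  finally show ?thesis .
qed

lemma kleitman:
  assumes "finite Y"
  shows "D \<subseteq> Pow Y \<Longrightarrow> (\<forall>S\<in>D. \<forall>T. T \<subseteq> S \<longrightarrow> T \<in> D) \<Longrightarrow> U \<subseteq> Pow Y \<Longrightarrow>
    (\<forall>S\<in>U. \<forall>T. S \<subseteq> T \<and> T \<subseteq> Y \<longrightarrow> T \<in> U) \<Longrightarrow>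
    2 ^ card Y * card (D \<inter> U) \<le> card D * card U"
  using assms
proof (induction Y arbitrary: D U rule: finite_induct)
  case empty
  have "D = {} \<or> D = {{}}" "U = {} \<or> U = {{}}" using empty by auto
  then show ?case by auto
next
  case (insert a Y)
  define D0 where "D0 = {S\<in>Pow Y. S\<in>D}"
  define D1 where "D1 = {S\<in>Pow Y. insert a S\<in>D}"
  define U0 where "U0 = {S\<in>Pow Y. S\<in>U}"
  define U1 where "U1 = {S\<in>Pow Y. insert a S\<in>U}"
  have dD: "\<forall>S\<in>D. \<forall>T. T \<subseteq> S \<longrightarrow> T \<in> D" and uU: "\<forall>S\<in>U. \<forall>T. S \<subseteq> T \<and> T \<subseteq> insert a Y \<longrightarrow> T \<in> U"
    using insert.prems by auto
  have IH0: "2 ^ card Y * card (D0 \<inter> U0) \<le> card D0 * card U0"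
  proof (rule insert.IH)
    show "\<forall>S\<in>D0. \<forall>T. T \<subseteq> S \<longrightarrow> T \<in> D0" using dD unfolding D0_def by auto
    show "\<forall>S\<in>U0. \<forall>T. S \<subseteq> T \<and> T \<subseteq> Y \<longrightarrow> T \<in> U0"
    proof (intro ballI allI impI)
      fix S T assume S: "S \<in> U0" and T: "S \<subseteq> T \<and> T \<subseteq> Y"
      then have "S \<in> U" "T \<subseteq> insert a Y" unfolding U0_def by auto
      then have "T \<in> U" using uU T by blast
      then show "T \<in> U0" using T unfolding U0_def by simp
    qed
  qed (use insert.hyps in \<open>auto simp: D0_def U0_def\<close>)
  have IH1: "2 ^ card Y * card (D1 \<inter> U1) \<le> card D1 * card U1"
  proof (rule insert.IH)
    show "\<forall>S\<in>D1. \<forall>T. T \<subseteq> S \<longrightarrow> T \<in> D1" unfolding D1_def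
    proof (intro ballI allI impI)
      fix S T assume "S \<in> {S \<in> Pow Y. insert a S \<in> D}" "T \<subseteq> S"
      then have "insert a S \<in> D" "insert a T \<subseteq> insert a S" "T \<subseteq> Y" by auto
      then have "insert a T \<in> D" using dD by blast
      then show "T \<in> {S \<in> Pow Y. insert a S \<in> D}" using \<open>T \<subseteq> Y\<close> by simp
    qed
    show "\<forall>S\<in>U1. \<forall>T. S \<subseteq> T \<and> T \<subseteq> Y \<longrightarrow> T \<in> U1" unfolding U1_def
    proof (intro ballI allI impI)
      fix S T assume "S \<in> {S \<in> Pow Y. insert a S \<in> U}" "S \<subseteq> T \<and> T \<subseteq> Y"
      then have "insert a S \<in> U" "insert a S \<subseteq> insert a T" "insert a T \<subseteq> insert a Y" "T \<subseteq> Y" by auto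
      then have "insert a T \<in> U" using uU by blast
      then show "T \<in> {S \<in> Pow Y. insert a S \<in> U}" using \<open>T \<subseteq> Y\<close> by simp
    qed
  qed (use insert.hyps in \<open>auto simp: D1_def U1_def\<close>)
  have cD: "card D = card D0 + card D1" unfolding D0_def D1_def
    by (rule split_card) (use insert in auto)
  have cU: "card U = card U0 + card U1" unfolding U0_def U1_def
    by (rule split_card) (use insert in auto)
  have "card (D \<inter> U) = card {S\<in>Pow Y. S\<in>D \<inter> U} + card {S\<in>Pow Y. insert a S \<in> D \<inter> U}"
    by (rule split_card) (use insert in auto)
  moreover have "{S\<in>Pow Y. S\<in>D \<inter> U} = D0 \<inter> U0" "{S\<in>Pow Y. insert a S \<in> D \<inter> U} = D1 \<inter> U1"
    unfolding D0_def D1_def U0_def U1_def by auto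
  ultimately have cDU: "card (D \<inter> U) = card (D0 \<inter> U0) + card (D1 \<inter> U1)" by simp
  have "D1 \<subseteq> D0"
  proof
    fix S assume "S \<in> D1"
    then have "insert a S \<in> D" "S \<subseteq> insert a S" "S \<subseteq> Y" unfolding D1_def by auto
    then show "S \<in> D0" using dD unfolding D0_def by blast
  qed
  then have le1: "card D1 \<le> card D0" by (rule card_mono[rotated]) (use insert.hyps in \<open>auto simp: D0_def\<close>)
  have "U0 \<subseteq> U1"
  proof
    fix S assume "S \<in> U0"
    then have "S \<in> U" "S \<subseteq> insert a S" "insert a S \<subseteq> insert a Y" "S \<subseteq> Y" unfolding U0_def by auto
    then show "S \<in> U1" using uU unfolding U1_def by blast
  qed
  then have le2: "card U0 \<le> card U1" by (rule card_mono[rotated]) (use insert.hyps in \<open>auto simp: U1_def\<close>)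
  have "2 * 2 ^ card Y * (card (D0 \<inter> U0) + card (D1 \<inter> U1)) \<le> (card D0 + card D1) * (card U0 + card U1)"
    by (rule arith_aux[OF IH0 IH1 le1 le2])
  then show ?case using insert.hyps cD cU cDU by simp
qed

lemma cross_bound:
  assumes "finite Y" "D1 \<subseteq> Pow Y" "D2 \<subseteq> Pow Y"
    and d1: "\<forall>S\<in>D1. \<forall>T. T \<subseteq> S \<longrightarrow> T \<in> D1" and d2: "\<forall>S\<in>D2. \<forall>T. T \<subseteq> S \<longrightarrow> T \<in> D2"
    and "P \<subseteq> D1" "Q \<subseteq> D2" and cr: "\<forall>S\<in>P. \<forall>T\<in>Q. S \<inter> T \<noteq> {}"
    and "card D1 \<le> card D2"
  shows "card P + card Q \<le> card D2"
proof -
  define U where "U = {S\<in>Pow Y. \<exists>S'\<in>P. S' \<subseteq> S}"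
  define V where "V = (\<lambda>S. Y - S) ` U"
  define M where "M = (2::nat) ^ card Y"
  have finP: "finite (Pow Y)" using assms(1) by simp
  have upU: "\<forall>S\<in>U. \<forall>T. S \<subseteq> T \<and> T \<subseteq> Y \<longrightarrow> T \<in> U" unfolding U_def by auto
  have UP: "U \<subseteq> Pow Y" unfolding U_def by auto
  have VP: "V \<subseteq> Pow Y" unfolding V_def by auto
  have downV: "\<forall>S\<in>V. \<forall>T. T \<subseteq> S \<longrightarrow> T \<in> V"
  proof (intro ballI allI impI)
    fix S T assume "S \<in> V" "T \<subseteq> S"
    then obtain S0 where S0: "S0 \<in> U" "S = Y - S0" unfolding V_def by auto
    have "S0 \<subseteq> Y - T" using S0 UP \<open>T \<subseteq> S\<close> by auto
    then have "Y - T \<in> U" using upU S0 by blast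
    moreover have "T = Y - (Y - T)" using S0 \<open>T \<subseteq> S\<close> by auto
    ultimately show "T \<in> V" unfolding V_def by blast
  qed
  have inj: "inj_on (\<lambda>S. Y - S) U"
  proof (rule inj_onI)
    fix S T assume S: "S \<in> U" and T: "T \<in> U" and eq: "Y - S = Y - T"
    have "S = Y - (Y - S)" using S UP by auto
    also have "\<dots> = T" using T UP eq by auto
    finally show "S = T" .
  qed
  have cV: "card V = card U" unfolding V_def by (rule card_image[OF inj])
  have QV: "Q \<inter> V = {}"
  proof (rule ccontr)
    assume "Q \<inter> V \<noteq> {}"
    then obtain T where T: "T \<in> Q" "T \<in> V" by auto
    then obtain S where S: "S \<in> U" "T = Y - S" unfolding V_def by auto
    then obtain S' where "S' \<in> P" "S' \<subseteq> S" unfolding U_def by auto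
    then have "S' \<inter> T \<noteq> {}" using cr T by auto
    then show False using S \<open>S' \<subseteq> S\<close> by auto
  qed
  have finD2: "finite D2" using assms(3) finP finite_subset by blast
  have "card Q + card (D2 \<inter> V) = card (Q \<union> (D2 \<inter> V))"
    by (rule card_Un_disjoint[symmetric]) (use finD2 assms(7) QV finite_subset in auto)
  also have "\<dots> \<le> card D2" by (rule card_mono[OF finD2]) (use assms(7) in auto)
  finally have c1: "card Q + card (D2 \<inter> V) \<le> card D2" .
  have finD1: "finite D1" using assms(2) finP finite_subset by blast
  have "P \<subseteq> D1 \<inter> U" using assms(6,2) unfolding U_def by auto
  then have c2: "card P \<le> card (D1 \<inter> U)" by (rule card_mono[rotated]) (use finD1 in auto)
  have K1: "M * card (D1 \<inter> U) \<le> card D1 * card U"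
    unfolding M_def by (rule kleitman[OF assms(1) assms(2) d1 UP upU])
  have K2': "M * card (D2 \<inter> (Pow Y - V)) \<le> card D2 * card (Pow Y - V)"
    unfolding M_def
  proof (rule kleitman[OF assms(1) assms(3) d2])
    show "\<forall>S\<in>Pow Y - V. \<forall>T. S \<subseteq> T \<and> T \<subseteq> Y \<longrightarrow> T \<in> Pow Y - V" using downV by blast
  qed auto
  have e1: "card (D2 \<inter> (Pow Y - V)) + card (D2 \<inter> V) = card D2"
  proof -
    have "card (D2 \<inter> (Pow Y - V)) + card (D2 \<inter> V) = card ((D2 \<inter> (Pow Y - V)) \<union> (D2 \<inter> V))"
      by (rule card_Un_disjoint[symmetric]) (use finD2 in auto)
    also have "(D2 \<inter> (Pow Y - V)) \<union> (D2 \<inter> V) = D2" using assms(3) by auto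
    finally show ?thesis .
  qed
  have e2: "card (Pow Y - V) + card V = M"
  proof -
    have "card (Pow Y - V) + card V = card ((Pow Y - V) \<union> V)"
      by (rule card_Un_disjoint[symmetric]) (use finP VP finite_subset in auto)
    also have "(Pow Y - V) \<union> V = Pow Y" using VP by auto
    finally show ?thesis unfolding M_def using assms(1) by (simp add: card_Pow)
  qed
  have K2: "card D2 * card V \<le> M * card (D2 \<inter> V)"
  proof -
    obtain a x b v where ax: "a = card (D2 \<inter> (Pow Y - V))" "x = card (D2 \<inter> V)"
      "b = card (Pow Y - V)" "v = card V" by blast
    have h: "(b + v) * a \<le> (a + x) * b" using K2' e1 e2 ax by simp
    then have "v * a \<le> x * b" by (simp add: algebra_simps)
    then have "(a + x) * v \<le> (b + v) * x" by (simp add: algebra_simps)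
    then show ?thesis using e1 e2 ax by simp
  qed
  have "M * card P \<le> M * card (D1 \<inter> U)" using c2 by simp
  also have "\<dots> \<le> card D1 * card U" by (rule K1)
  also have "\<dots> \<le> card D2 * card V" using assms(9) cV by simp
  also have "\<dots> \<le> M * card (D2 \<inter> V)" by (rule K2)
  finally have "card P \<le> card (D2 \<inter> V)" unfolding M_def by simp
  then show ?thesis using c1 by simp
qed


lemma card_le_Max_star:
  assumes "G \<subseteq> Pow {1..n}" "z \<in> {1..(n::nat)}" "F \<subseteq> {A\<in>G. z \<in> A}"
  shows "card F \<le> Max ((\<lambda>x. card {A\<in>G. x \<in> A}) ` {1..n})"
proof -
  have "finite G" using assms(1) finite_subset by blast
  then have "card F \<le> card {A\<in>G. z \<in> A}" using assms(3) by (intro card_mono) auto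
  also have "\<dots> \<le> Max ((\<lambda>x. card {A\<in>G. x \<in> A}) ` {1..n})"
    by (rule Max_ge) (use assms(2) in auto)
  finally show ?thesis .
qed

lemma two_elems:
  assumes "finite T" "card T \<le> 2"
  shows "\<exists>x y. T \<subseteq> {x, y}"
proof (cases "T = {}")
  case True then show ?thesis by auto
next
  case False
  then obtain x where x: "x \<in> T" by auto
  have "card (T - {x}) \<le> Suc 0" using assms x by auto
  then have "\<forall>a\<in>T - {x}. \<forall>b\<in>T - {x}. a = b" using assms(1) by (simp add: card_le_Suc0_iff_eq)
  then show ?thesis by blast
qed

theorem theorem1p7:
  fixes n :: nat and F G :: "nat set set"
  assumes "n \<ge> 1"
    and "G \<subseteq> Pow {1..n}" and "F \<subseteq> G"
    and "down_set G" and "intersecting F"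
    and "covering_number F \<le> 2"
  shows "card F \<le> Max ((\<lambda>x. card {A\<in>G. x \<in> A}) ` {1..n})"
proof (cases "F = {}")
  case True then show ?thesis by simp
next
  case Fne: False
  have FP: "F \<subseteq> Pow {1..n}" using assms(2,3) by auto
  have nonempty: "\<forall>A\<in>F. A \<noteq> {}" using assms(5) unfolding intersecting_def by blast
  have ex: "\<exists>T. finite T \<and> card T = card {1..n} \<and> (\<forall>X\<in>F. T \<inter> X \<noteq> {})"
  proof (intro exI[of _ "{1..n}"] conjI ballI)
    fix X assume "X \<in> F"
    then have "X \<subseteq> {1..n}" "X \<noteq> {}" using FP nonempty by auto
    then show "{1..n} \<inter> X \<noteq> {}" by (simp add: Int_absorb1)
  qed auto
  then have ex2: "\<exists>t. \<exists>T. finite T \<and> card T = t \<and> (\<forall>X\<in>F. T \<inter> X \<noteq> {})" by blast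
  obtain T where T: "finite T" "card T = covering_number F" "\<forall>X\<in>F. T \<inter> X \<noteq> {}"
    using LeastI_ex[OF ex2] unfolding covering_number_def by blast
  obtain x y where "T \<subseteq> {x, y}" using two_elems[OF T(1)] T(2) assms(6) by auto
  then have cov: "\<forall>A\<in>F. x \<in> A \<or> y \<in> A" using T(3) by blast
  show ?thesis
  proof (cases "\<forall>A\<in>F. x \<in> A")
    case True
    then have "x \<in> {1..n}" using Fne FP by blast
    moreover have "F \<subseteq> {A\<in>G. x \<in> A}" using True assms(3) by auto
    ultimately show ?thesis by (rule card_le_Max_star[OF assms(2)])
  next
    case nx: False
    show ?thesis
    proof (cases "\<forall>A\<in>F. y \<in> A")
      case True
      then have "y \<in> {1..n}" using Fne FP by blast
      moreover have "F \<subseteq> {A\<in>G. y \<in> A}" using True assms(3) by auto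
      ultimately show ?thesis by (rule card_le_Max_star[OF assms(2)])
    next
      case ny: False
      obtain A1 where A1: "A1 \<in> F" "x \<notin> A1" using nx by blast
      obtain A2 where A2: "A2 \<in> F" "y \<notin> A2" using ny by blast
      have yn: "y \<in> {1..n}" using A1 cov FP by blast
      have xn: "x \<in> {1..n}" using A2 cov FP by blast
      have xy: "x \<noteq> y" using A1 cov by blast
      define Y where "Y = {1..n} - {x, y}"
      define D1 where "D1 = {S\<in>Pow Y. insert x S \<in> G}"
      define D2 where "D2 = {S\<in>Pow Y. insert y S \<in> G}"
      define E where "E = {S\<in>Pow Y. insert x (insert y S) \<in> G}"
      define P where "P = {S\<in>Pow Y. insert x S \<in> F}"
      define Q where "Q = {S\<in>Pow Y. insert y S \<in> F}"
      define R where "R = {S\<in>Pow Y. insert x (insert y S) \<in> F}"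
      define h where "h = (\<lambda>S. insert x (insert y S))"
      have finY: "finite Y" unfolding Y_def by simp
      have finPY: "finite (Pow Y)" using finY by simp
      have xY: "x \<notin> Y" and yY: "y \<notin> Y" unfolding Y_def by auto
      have dG: "\<forall>B\<in>G. \<forall>A. A \<subseteq> B \<longrightarrow> A \<in> G" using assms(4) unfolding down_set_def by blast
      have finG: "finite G" using assms(2) finite_subset by blast
      have "F \<subseteq> insert x ` P \<union> insert y ` Q \<union> h ` R"
      proof
        fix A assume A: "A \<in> F"
        define S where "S = A - {x, y}"
        have SY: "S \<in> Pow Y" using A FP unfolding S_def Y_def by auto
        consider "x \<in> A" "y \<notin> A" | "x \<notin> A" "y \<in> A" | "x \<in> A" "y \<in> A" using cov A by blast
        then show "A \<in> insert x ` P \<union> insert y ` Q \<union> h ` R"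
        proof cases
          case 1
          then have "A = insert x S" unfolding S_def by auto
          then show ?thesis using A SY unfolding P_def by blast
        next
          case 2
          then have "A = insert y S" unfolding S_def by auto
          then show ?thesis using A SY unfolding Q_def by blast
        next
          case 3
          then have "A = h S" unfolding S_def h_def by auto
          then show ?thesis using A SY unfolding R_def h_def by blast
        qed
      qed
      then have "card F \<le> card (insert x ` P \<union> insert y ` Q \<union> h ` R)"
        by (rule card_mono[rotated]) (use finPY in \<open>auto simp: P_def Q_def R_def\<close>)
      also have "\<dots> \<le> card (insert x ` P) + card (insert y ` Q) + card (h ` R)"
        using card_Un_le[of "insert x ` P \<union> insert y ` Q" "h ` R"] card_Un_le[of "insert x ` P" "insert y ` Q"]
        by linarith
      also have "\<dots> \<le> card P + card Q + card R"
        by (intro add_mono card_image_le) (use finPY in \<open>auto simp: P_def Q_def R_def\<close>)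
      finally have cF: "card F \<le> card P + card Q + card R" .
      have RE: "card R \<le> card E"
        by (rule card_mono) (use finPY assms(3) in \<open>auto simp: R_def E_def\<close>)
      have injx: "inj_on (insert x) (Pow Y)"
      proof (rule inj_onI)
        fix S T assume S: "S \<in> Pow Y" and T: "T \<in> Pow Y" and eq: "insert x S = insert x T"
        have "S = insert x S - {x}" using S xY by auto
        also have "\<dots> = T" using T xY eq by auto
        finally show "S = T" .
      qed
      have injy: "inj_on (insert y) (Pow Y)"
      proof (rule inj_onI)
        fix S T assume S: "S \<in> Pow Y" and T: "T \<in> Pow Y" and eq: "insert y S = insert y T"
        have "S = insert y S - {y}" using S yY by auto
        also have "\<dots> = T" using T yY eq by auto
        finally show "S = T" .
      qed
      have injh: "inj_on h (Pow Y)"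
      proof (rule inj_onI)
        fix S T assume S: "S \<in> Pow Y" and T: "T \<in> Pow Y" and eq: "h S = h T"
        have "S = h S - {x, y}" using S xY yY unfolding h_def by auto
        also have "\<dots> = h T - {x, y}" using eq by simp
        also have "\<dots> = T" using T xY yY unfolding h_def by auto
        finally show "S = T" .
      qed
      have degx: "card D1 + card E \<le> card {A\<in>G. x \<in> A}"
      proof -
        have "card D1 + card E = card (insert x ` D1) + card (h ` E)"
        proof -
          have "card (insert x ` D1) = card D1"
            by (rule card_image, rule inj_on_subset[OF injx]) (auto simp: D1_def)
          moreover have "card (h ` E) = card E"
            by (rule card_image, rule inj_on_subset[OF injh]) (auto simp: E_def)
          ultimately show ?thesis by simp
        qed
        also have "\<dots> = card (insert x ` D1 \<union> h ` E)"
          by (rule card_Un_disjoint[symmetric]) (use finPY yY xy in \<open>auto simp: D1_def E_def h_def\<close>)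
        also have "\<dots> \<le> card {A\<in>G. x \<in> A}"
          by (rule card_mono) (use finG in \<open>auto simp: D1_def E_def h_def\<close>)
        finally show ?thesis .
      qed
      have degy: "card D2 + card E \<le> card {A\<in>G. y \<in> A}"
      proof -
        have "card D2 + card E = card (insert y ` D2) + card (h ` E)"
        proof -
          have "card (insert y ` D2) = card D2"
            by (rule card_image, rule inj_on_subset[OF injy]) (auto simp: D2_def)
          moreover have "card (h ` E) = card E"
            by (rule card_image, rule inj_on_subset[OF injh]) (auto simp: E_def)
          ultimately show ?thesis by simp
        qed
        also have "\<dots> = card (insert y ` D2 \<union> h ` E)"
          by (rule card_Un_disjoint[symmetric]) (use finPY xY xy in \<open>auto simp: D2_def E_def h_def\<close>)
        also have "\<dots> \<le> card {A\<in>G. y \<in> A}"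
          by (rule card_mono) (use finG in \<open>auto simp: D2_def E_def h_def\<close>)
        finally show ?thesis .
      qed
      have d1: "\<forall>S\<in>D1. \<forall>T. T \<subseteq> S \<longrightarrow> T \<in> D1"
      proof (intro ballI allI impI)
        fix S T assume "S \<in> D1" "T \<subseteq> S"
        then have "insert x S \<in> G" "insert x T \<subseteq> insert x S" "T \<subseteq> Y" unfolding D1_def by auto
        then have "insert x T \<in> G" using dG by blast
        then show "T \<in> D1" using \<open>T \<subseteq> Y\<close> unfolding D1_def by simp
      qed
      have d2: "\<forall>S\<in>D2. \<forall>T. T \<subseteq> S \<longrightarrow> T \<in> D2"
      proof (intro ballI allI impI)
        fix S T assume "S \<in> D2" "T \<subseteq> S"
        then have "insert y S \<in> G" "insert y T \<subseteq> insert y S" "T \<subseteq> Y" unfolding D2_def by auto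
        then have "insert y T \<in> G" using dG by blast
        then show "T \<in> D2" using \<open>T \<subseteq> Y\<close> unfolding D2_def by simp
      qed
      have PD: "P \<subseteq> D1" and QD: "Q \<subseteq> D2" using assms(3) unfolding P_def Q_def D1_def D2_def by auto
      have cr: "\<forall>S\<in>P. \<forall>T\<in>Q. S \<inter> T \<noteq> {}"
      proof (intro ballI)
        fix S T assume S: "S \<in> P" and T: "T \<in> Q"
        have "insert x S \<inter> insert y T \<noteq> {}" using S T assms(5)
          unfolding intersecting_def P_def Q_def by blast
        then show "S \<inter> T \<noteq> {}" using S T xY yY xy unfolding P_def Q_def by auto
      qed
      have D1P: "D1 \<subseteq> Pow Y" and D2P: "D2 \<subseteq> Pow Y" unfolding D1_def D2_def by auto
      show ?thesis
      proof (cases "card D1 \<le> card D2")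
        case True
        have "card P + card Q \<le> card D2"
          by (rule cross_bound[OF finY D1P D2P d1 d2 PD QD cr True])
        then have "card F \<le> card {A\<in>G. y \<in> A}" using cF RE degy by linarith
        then show ?thesis using card_le_Max_star[OF assms(2) yn subset_refl] by linarith
      next
        case False
        have cr': "\<forall>S\<in>Q. \<forall>T\<in>P. S \<inter> T \<noteq> {}" using cr by blast
        have "card Q + card P \<le> card D1"
          by (rule cross_bound[OF finY D2P D1P d2 d1 QD PD cr']) (use False in simp)
        then have "card F \<le> card {A\<in>G. x \<in> A}" using cF RE degx by linarith
        then show ?thesis using card_le_Max_star[OF assms(2) xn subset_refl] by linarith
      qed
    qed
  qed
qed

end
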